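(* If $C$ is a semiprime $k$-coalgebra with finite coradical filtration (i.e. $C=C_n$ for some $n$), then $C$ is cosemisimple (i.e. $C=\mathrm{Soc}\,C=C_0$). *)

theory Defs
  imports Main "HOL-Library.Groups_Big_Fun"
begin

text \<open>A k-coalgebra C is represented through a chosen basis indexed by the type 'b
  (every vector space has a basis).  Vectors of C are finitely supported functions
  'b \<Rightarrow> 'k, tensors in C \<otimes> C are finitely supported functions on 'b \<times> 'b.
  The structure constants delta b (x,y) give Delta(b) = sum delta b (x,y) x \<otimes> y,
  and eps b is the counit on basis vectors.\<close>

definition fin_supp :: "('a \<Rightarrow> 'k::zero) \<Rightarrow> bool" where
  "fin_supp v \<longleftrightarrow> finite {x. v x \<noteq> 0}"

definition Cspace :: "('a \<Rightarrow> 'k::zero) set" where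
  "Cspace = {v. fin_supp v}"

definition fspan :: "('a \<Rightarrow> 'k::field) set \<Rightarrow> ('a \<Rightarrow> 'k) set" where
  "fspan S = {v. \<exists>A c. finite A \<and> A \<subseteq> S \<and> v = (\<lambda>x. \<Sum>a\<in>A. c a * a x)}"

definition fsubspace :: "('a \<Rightarrow> 'k::field) set \<Rightarrow> bool" where
  "fsubspace D \<longleftrightarrow> D \<subseteq> Cspace \<and> (\<lambda>_. 0) \<in> D
     \<and> (\<forall>u\<in>D. \<forall>v\<in>D. (\<lambda>x. u x + v x) \<in> D)
     \<and> (\<forall>a. \<forall>v\<in>D. (\<lambda>x. a * v x) \<in> D)"

definition tprod :: "('b \<Rightarrow> 'k::field) \<Rightarrow> ('b \<Rightarrow> 'k) \<Rightarrow> ('b \<times> 'b \<Rightarrow> 'k)" where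
  "tprod u v = (\<lambda>(x, y). u x * v y)"

definition tens :: "('b \<Rightarrow> 'k::field) set \<Rightarrow> ('b \<Rightarrow> 'k) set \<Rightarrow> ('b \<times> 'b \<Rightarrow> 'k) set" where
  "tens D E = fspan {tprod d e | d e. d \<in> D \<and> e \<in> E}"

definition coalgebra :: "('b \<Rightarrow> 'b \<times> 'b \<Rightarrow> 'k::field) \<Rightarrow> ('b \<Rightarrow> 'k) \<Rightarrow> bool" where
  "coalgebra \<delta> \<epsilon> \<longleftrightarrow>
     (\<forall>b. fin_supp (\<delta> b))
   \<and> (\<forall>b u v w. Sum_any (\<lambda>x. \<delta> b (x, w) * \<delta> x (u, v)) = Sum_any (\<lambda>y. \<delta> b (u, y) * \<delta> y (v, w)))
   \<and> (\<forall>b u. Sum_any (\<lambda>x. \<epsilon> x * \<delta> b (x, u)) = (if u = b then 1 else 0))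
   \<and> (\<forall>b u. Sum_any (\<lambda>y. \<delta> b (u, y) * \<epsilon> y) = (if u = b then 1 else 0))"

definition Delta :: "('b \<Rightarrow> 'b \<times> 'b \<Rightarrow> 'k::field) \<Rightarrow> ('b \<Rightarrow> 'k) \<Rightarrow> ('b \<times> 'b \<Rightarrow> 'k)" where
  "Delta \<delta> v = (\<lambda>p. Sum_any (\<lambda>b. v b * \<delta> b p))"

definition subcoalgebra :: "('b \<Rightarrow> 'b \<times> 'b \<Rightarrow> 'k::field) \<Rightarrow> ('b \<Rightarrow> 'k) set \<Rightarrow> bool" where
  "subcoalgebra \<delta> D \<longleftrightarrow> fsubspace D \<and> (\<forall>v\<in>D. Delta \<delta> v \<in> tens D D)"

definition simple_subcoalgebra :: "('b \<Rightarrow> 'b \<times> 'b \<Rightarrow> 'k::field) \<Rightarrow> ('b \<Rightarrow> 'k) set \<Rightarrow> bool" where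
  "simple_subcoalgebra \<delta> D \<longleftrightarrow> subcoalgebra \<delta> D \<and> D \<noteq> {\<lambda>_. 0}
     \<and> (\<forall>E. subcoalgebra \<delta> E \<and> E \<subseteq> D \<longrightarrow> E = {\<lambda>_. 0} \<or> E = D)"

definition coradical :: "('b \<Rightarrow> 'b \<times> 'b \<Rightarrow> 'k::field) \<Rightarrow> ('b \<Rightarrow> 'k) set" where
  "coradical \<delta> = fspan (\<Union>{D. simple_subcoalgebra \<delta> D})"

definition wedge :: "('b \<Rightarrow> 'b \<times> 'b \<Rightarrow> 'k::field) \<Rightarrow> ('b \<Rightarrow> 'k) set \<Rightarrow> ('b \<Rightarrow> 'k) set \<Rightarrow> ('b \<Rightarrow> 'k) set" where
  "wedge \<delta> D E = {v \<in> Cspace. Delta \<delta> v \<in> fspan (tens D Cspace \<union> tens Cspace E)}"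

fun corad_filt :: "('b \<Rightarrow> 'b \<times> 'b \<Rightarrow> 'k::field) \<Rightarrow> nat \<Rightarrow> ('b \<Rightarrow> 'k) set" where
  "corad_filt \<delta> 0 = coradical \<delta>"
| "corad_filt \<delta> (Suc n) = wedge \<delta> (corad_filt \<delta> n) (coradical \<delta>)"

definition semiprime :: "('b \<Rightarrow> 'b \<times> 'b \<Rightarrow> 'k::field) \<Rightarrow> bool" where
  "semiprime \<delta> \<longleftrightarrow> (\<forall>D. subcoalgebra \<delta> D \<and> wedge \<delta> D D = Cspace \<longrightarrow> D = Cspace)"

definition cosemisimple :: "('b \<Rightarrow> 'b \<times> 'b \<Rightarrow> 'k::field) \<Rightarrow> bool" where
  "cosemisimple \<delta> \<longleftrightarrow> coradical \<delta> = Cspace"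

end

theory Submission
  imports Defs
begin



definition lclosed :: "('a \<Rightarrow> 'k::field) set \<Rightarrow> bool" where
  "lclosed V \<longleftrightarrow> (\<lambda>_. 0) \<in> V \<and> (\<forall>u\<in>V. \<forall>v\<in>V. (\<lambda>x. u x + v x) \<in> V)
     \<and> (\<forall>a. \<forall>v\<in>V. (\<lambda>x. a * v x) \<in> V)"

lemma fsubspace_iff: "fsubspace D \<longleftrightarrow> D \<subseteq> Cspace \<and> lclosed D"
  unfolding fsubspace_def lclosed_def by blast

lemma lclosed_zero: "lclosed V \<Longrightarrow> (\<lambda>_. 0) \<in> V"
  unfolding lclosed_def by blast
lemma lclosed_add: "lclosed V \<Longrightarrow> u \<in> V \<Longrightarrow> v \<in> V \<Longrightarrow> (\<lambda>x. u x + v x) \<in> V"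
  unfolding lclosed_def by blast
lemma lclosed_scale: "lclosed V \<Longrightarrow> v \<in> V \<Longrightarrow> (\<lambda>x. a * v x) \<in> V"
  unfolding lclosed_def by blast
lemma lclosed_diff: "lclosed V \<Longrightarrow> u \<in> V \<Longrightarrow> v \<in> V \<Longrightarrow> (\<lambda>x. u x - v x) \<in> V"
proof -
  assume a: "lclosed V" "u \<in> V" "v \<in> V"
  have "(\<lambda>x. (-1) * v x) \<in> V" by (rule lclosed_scale[OF a(1,3)])
  then have "(\<lambda>x. u x + (-1) * v x) \<in> V" using a lclosed_add[of V u "\<lambda>x. (-1) * v x"] by simp
  then show ?thesis by simp
qed

lemma lclosed_sum:
  assumes V: "lclosed V" and fin: "finite I" and f: "\<forall>i\<in>I. f i \<in> V"
  shows "(\<lambda>x. \<Sum>i\<in>I. g i * f i x) \<in> V"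
  using fin f
proof (induction I rule: finite_induct)
  case empty then show ?case using V by (simp add: lclosed_zero)
next
  case (insert i I)
  have "(\<lambda>x. g i * f i x) \<in> V" using insert lclosed_scale[OF V, of "f i"] by simp
  then have "(\<lambda>x. g i * f i x + (\<Sum>i\<in>I. g i * f i x)) \<in> V"
    using insert V lclosed_add[of V "\<lambda>x. g i * f i x" "\<lambda>x. \<Sum>i\<in>I. g i * f i x"] by simp
  then show ?case using insert by simp
qed

lemma fspan_least: assumes V: "lclosed V" and S: "S \<subseteq> V" shows "fspan S \<subseteq> V"
proof
  fix v assume "v \<in> fspan S"
  then obtain A c where A: "finite A" "A \<subseteq> S" "v = (\<lambda>x. \<Sum>a\<in>A. c a * a x)" unfolding fspan_def by (elim CollectE exE conjE)
  have "\<forall>a\<in>A. a \<in> V" using A S by blast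
  from lclosed_sum[OF V A(1) this, of c] show "v \<in> V" using A(3) by simp
qed

lemma fspan_base: "s \<in> S \<Longrightarrow> s \<in> fspan S"
  unfolding fspan_def by (rule CollectI, rule exI[of _ "{s}"], rule exI[of _ "\<lambda>_. 1"]) simp

lemma lclosed_fspan: "lclosed (fspan S)"
  unfolding lclosed_def
proof (intro conjI ballI allI)
  show "(\<lambda>_. 0) \<in> fspan S" unfolding fspan_def by (rule CollectI, rule exI[of _ "{}"]) simp
next
  fix u v assume u: "u \<in> fspan S" and v: "v \<in> fspan S"
  from u obtain A c where A: "finite A" "A \<subseteq> S" "u = (\<lambda>x. \<Sum>a\<in>A. c a * a x)"
    unfolding fspan_def by (elim CollectE exE conjE) 
  from v obtain B d where B: "finite B" "B \<subseteq> S" "v = (\<lambda>x. \<Sum>a\<in>B. d a * a x)"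
    unfolding fspan_def by (elim CollectE exE conjE)
  define e where "e a = (if a \<in> A then c a else 0) + (if a \<in> B then d a else 0)" for a
  have "(\<lambda>x. u x + v x) = (\<lambda>x. \<Sum>a\<in>A \<union> B. e a * a x)"
  proof
    fix x
    have "(\<Sum>a\<in>A \<union> B. e a * a x) = (\<Sum>a\<in>A \<union> B. (if a \<in> A then c a * a x else 0))
        + (\<Sum>a\<in>A \<union> B. (if a \<in> B then d a * a x else 0))"
      unfolding e_def sum.distrib[symmetric] by (rule sum.cong) (auto simp: distrib_right)
    also have "\<dots> = (\<Sum>a\<in>(A \<union> B) \<inter> A. c a * a x) + (\<Sum>a\<in>(A \<union> B) \<inter> B. d a * a x)"
      using A B by (simp add: sum.inter_restrict[symmetric])
    also have "\<dots> = u x + v x" using A B by (simp add: Int_absorb1)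
    finally show "u x + v x = (\<Sum>a\<in>A \<union> B. e a * a x)" by simp
  qed
  moreover have "finite (A \<union> B)" "A \<union> B \<subseteq> S" using A B by auto
  ultimately show "(\<lambda>x. u x + v x) \<in> fspan S" unfolding fspan_def
    by (intro CollectI exI[of _ "A \<union> B"] exI[of _ e] conjI)
next
  fix r v assume "v \<in> fspan S"
  then obtain A c where A: "finite A" "A \<subseteq> S" "v = (\<lambda>x. \<Sum>a\<in>A. c a * a x)" unfolding fspan_def by (elim CollectE exE conjE)
  have "(\<lambda>x. r * v x) = (\<lambda>x. \<Sum>a\<in>A. (r * c a) * a x)" using A by (simp add: sum_distrib_left mult.assoc)
  then show "(\<lambda>x. r * v x) \<in> fspan S" unfolding fspan_def
    by (intro CollectI exI[of _ A] exI[of _ "\<lambda>a. r * c a"] conjI A(1) A(2))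
qed

lemma fspan_mono: "S \<subseteq> T \<Longrightarrow> fspan S \<subseteq> fspan T"
  by (rule fspan_least[OF lclosed_fspan]) (auto intro: fspan_base)

lemma fspan_sum: "finite I \<Longrightarrow> (\<forall>i\<in>I. f i \<in> fspan S) \<Longrightarrow> (\<lambda>x. \<Sum>i\<in>I. g i * f i x) \<in> fspan S"
  by (rule lclosed_sum[OF lclosed_fspan])

lemma lclosed_Cspace: "lclosed (Cspace :: ('a \<Rightarrow> 'k::field) set)"
  unfolding lclosed_def Cspace_def fin_supp_def
proof (intro conjI ballI allI)
  fix u v :: "'a \<Rightarrow> 'k" assume u: "u \<in> {v. finite {x. v x \<noteq> 0}}" and v: "v \<in> {v. finite {x. v x \<noteq> 0}}"
  have "{x. u x + v x \<noteq> 0} \<subseteq> {x. u x \<noteq> 0} \<union> {x. v x \<noteq> 0}" by auto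
  moreover have "finite ({x. u x \<noteq> 0} \<union> {x. v x \<noteq> 0})" using u v by simp
  ultimately have "finite {x. u x + v x \<noteq> 0}" by (rule finite_subset)
  then show "(\<lambda>x. u x + v x) \<in> {v. finite {x. v x \<noteq> 0}}" by simp
next
  fix a and v :: "'a \<Rightarrow> 'k" assume v: "v \<in> {v. finite {x. v x \<noteq> 0}}"
  have "{x. a * v x \<noteq> 0} \<subseteq> {x. v x \<noteq> 0}" by auto
  then have "finite {x. a * v x \<noteq> 0}" by (rule finite_subset) (use v in simp)
  then show "(\<lambda>x. a * v x) \<in> {v. finite {x. v x \<noteq> 0}}" by simp
qed simp

lemma fspan_Cspace: "S \<subseteq> Cspace \<Longrightarrow> fspan S \<subseteq> Cspace"
  by (rule fspan_least[OF lclosed_Cspace])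

lemma fsubspace_fspan: "S \<subseteq> Cspace \<Longrightarrow> fsubspace (fspan S)"
  unfolding fsubspace_iff using fspan_Cspace[of S] lclosed_fspan[of S] by simp

lemma fspan_lclosed_eq: "lclosed V \<Longrightarrow> fspan V = V"
  by (rule equalityI, rule fspan_least, assumption, rule subset_refl) (auto intro: fspan_base)




lemma Cspace_iff: "v \<in> Cspace \<longleftrightarrow> finite {x. v x \<noteq> 0}"
  unfolding Cspace_def fin_supp_def by simp

lemma tprod_app[simp]: "tprod u v (x, y) = u x * v y"
  unfolding tprod_def by simp

lemma tprod_Cspace: "u \<in> Cspace \<Longrightarrow> v \<in> Cspace \<Longrightarrow> tprod u v \<in> Cspace"
  unfolding Cspace_iff
  by (rule finite_subset[of _ "{x. u x \<noteq> 0} \<times> {x. v x \<noteq> 0}"]) auto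

lemma tens_Cspace: "D \<subseteq> Cspace \<Longrightarrow> E \<subseteq> Cspace \<Longrightarrow> tens D E \<subseteq> Cspace"
  unfolding tens_def by (rule fspan_Cspace) (auto intro: tprod_Cspace)

lemma tens_mono: "D \<subseteq> D' \<Longrightarrow> E \<subseteq> E' \<Longrightarrow> tens D E \<subseteq> tens D' E'"
  unfolding tens_def by (rule fspan_mono) blast

lemma lclosed_tens: "lclosed (tens D E)"
  unfolding tens_def by (rule lclosed_fspan)

lemma tprod_tens: "d \<in> D \<Longrightarrow> e \<in> E \<Longrightarrow> tprod d e \<in> tens D E"
  unfolding tens_def by (rule fspan_base) blast

lemma tens_slices:
  assumes X: "lclosed X" and Y: "lclosed Y" and t: "t \<in> tens X Y"
  shows "(\<lambda>y. t (x, y)) \<in> Y" "(\<lambda>x. t (x, y)) \<in> X"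
proof -
  define V where "V = {t. (\<forall>x. (\<lambda>y. t (x, y)) \<in> Y) \<and> (\<forall>y. (\<lambda>x. t (x, y)) \<in> X)}"
  have "lclosed V"
    unfolding lclosed_def
  proof (intro conjI ballI allI)
    show "(\<lambda>_. 0) \<in> V" unfolding V_def using lclosed_zero[OF X] lclosed_zero[OF Y] by simp
  next
    fix u v assume "u \<in> V" "v \<in> V"
    then show "(\<lambda>x. u x + v x) \<in> V" unfolding V_def
      using lclosed_add[OF X, of "\<lambda>x. u (x, _)" "\<lambda>x. v (x, _)"] lclosed_add[OF Y, of "\<lambda>y. u (_, y)" "\<lambda>y. v (_, y)"] by simp
  next
    fix a v assume "v \<in> V"
    then show "(\<lambda>x. a * v x) \<in> V" unfolding V_def
      using lclosed_scale[OF X, of "\<lambda>x. v (x, _)"] lclosed_scale[OF Y, of "\<lambda>y. v (_, y)"] by simp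
  qed
  moreover have "{tprod d e | d e. d \<in> X \<and> e \<in> Y} \<subseteq> V"
  proof (rule subsetI)
    fix z assume "z \<in> {tprod d e | d e. d \<in> X \<and> e \<in> Y}"
    then obtain d e where z: "z = tprod d e" "d \<in> X" "e \<in> Y" by blast
    have "(\<lambda>y. d x * e y) \<in> Y" "(\<lambda>x. e y * d x) \<in> X" for x y
      using lclosed_scale[OF Y z(3), of "d x"] lclosed_scale[OF X z(2), of "e y"] by auto
    then show "z \<in> V" unfolding V_def z(1) by (simp add: mult.commute)
  qed
  ultimately have "tens X Y \<subseteq> V" unfolding tens_def by (rule fspan_least)
  from subsetD[OF this t] show "(\<lambda>y. t (x, y)) \<in> Y" "(\<lambda>x. t (x, y)) \<in> X" unfolding V_def by simp_all
qed


definition ind :: "'a \<Rightarrow> 'a \<Rightarrow> 'k::field" where "ind x = (\<lambda>z. if z = x then 1 else 0)"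

lemma ind_Cspace: "ind x \<in> Cspace"
  unfolding Cspace_iff ind_def by (rule finite_subset[of _ "{x}"]) auto

lemma rows_tens:
  assumes t: "t \<in> Cspace" and Y: "Y \<subseteq> Cspace" and rows: "\<And>x. (\<lambda>y. t (x, y)) \<in> Y"
  shows "t \<in> tens Cspace Y"
proof -
  define F where "F = fst ` {p. t p \<noteq> 0}"
  have fin: "finite F" using t unfolding F_def Cspace_iff by simp
  have "t = (\<lambda>p. \<Sum>x\<in>F. 1 * tprod (ind x) (\<lambda>y. t (x, y)) p)"
  proof
    fix p :: "'a \<times> 'a" obtain a b where p: "p = (a, b)" by force
    have "(\<Sum>x\<in>F. 1 * tprod (ind x) (\<lambda>y. t (x, y)) p) = (\<Sum>x\<in>F. if a = x then t (x, b) else 0)"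
      unfolding p by (rule sum.cong) (auto simp: ind_def)
    also have "\<dots> = (if a \<in> F then t (a, b) else 0)" using fin by (simp add: sum.delta)
    also have "\<dots> = t p" unfolding p F_def by (auto simp: image_iff)
    finally show "t p = (\<Sum>x\<in>F. 1 * tprod (ind x) (\<lambda>y. t (x, y)) p)" by simp
  qed
  also have "\<dots> \<in> tens Cspace Y"
    unfolding tens_def by (rule fspan_sum[OF fin]) (auto intro!: fspan_base ind_Cspace rows)
  finally show ?thesis .
qed

lemma cols_tens:
  assumes t: "t \<in> Cspace" and X: "X \<subseteq> Cspace" and cols: "\<And>y. (\<lambda>x. t (x, y)) \<in> X"
  shows "t \<in> tens X Cspace"
proof -
  define F where "F = snd ` {p. t p \<noteq> 0}"
  have fin: "finite F" using t unfolding F_def Cspace_iff by simp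
  have "t = (\<lambda>p. \<Sum>y\<in>F. 1 * tprod (\<lambda>x. t (x, y)) (ind y) p)"
  proof
    fix p :: "'a \<times> 'a" obtain a b where p: "p = (a, b)" by force
    have "(\<Sum>y\<in>F. 1 * tprod (\<lambda>x. t (x, y)) (ind y) p) = (\<Sum>y\<in>F. if b = y then t (a, y) else 0)"
      unfolding p by (rule sum.cong) (auto simp: ind_def)
    also have "\<dots> = (if b \<in> F then t (a, b) else 0)" using fin by (simp add: sum.delta)
    also have "\<dots> = t p" unfolding p F_def by (auto simp: image_iff)
    finally show "t p = (\<Sum>y\<in>F. 1 * tprod (\<lambda>x. t (x, y)) (ind y) p)" by simp
  qed
  also have "\<dots> \<in> tens X Cspace"
    unfolding tens_def by (rule fspan_sum[OF fin]) (auto intro!: fspan_base ind_Cspace cols)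
  finally show ?thesis .
qed

lemma rank_elim:
  fixes X Y :: "('a \<Rightarrow> 'k::field) set"
  assumes X: "fsubspace X" and Y: "fsubspace Y"
  shows "\<forall>t :: 'a \<times> 'a \<Rightarrow> 'k. t \<in> Cspace \<and> card {x. \<exists>y. t (x, y) \<noteq> 0} = n \<and> (\<forall>x. (\<lambda>y. t (x, y)) \<in> Y)
      \<and> (\<forall>y. (\<lambda>x. t (x, y)) \<in> X) \<longrightarrow> t \<in> tens X Y"
proof (induction n rule: less_induct)
  case (less n)
  have lX: "lclosed X" and lY: "lclosed Y" using X Y unfolding fsubspace_iff by simp_all
  show ?case
  proof (intro allI impI, elim conjE)
    fix t :: "'a \<times> 'a \<Rightarrow> 'k"
    assume t: "t \<in> Cspace" and n: "card {x. \<exists>y. t (x, y) \<noteq> 0} = n"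
      and rows: "\<forall>x. (\<lambda>y. t (x, y)) \<in> Y" and cols: "\<forall>y. (\<lambda>x. t (x, y)) \<in> X"
    let ?N = "\<lambda>t. {x. \<exists>y. t (x, y) \<noteq> 0}"
    have "?N t \<subseteq> fst ` {p. t p \<noteq> 0}" by force
    then have finN: "finite (?N t)" using t unfolding Cspace_iff by (meson finite_imageI finite_subset)
    show "t \<in> tens X Y"
    proof (cases "?N t = {}")
      case True
      have "t = (\<lambda>_. 0)"
      proof
        fix p show "t p = 0" using True by (cases p) auto
      qed
      then show ?thesis using lclosed_zero[OF lclosed_tens, of X Y] by simp
    next
      case False
      then obtain x0 y0 where a: "t (x0, y0) \<noteq> 0" by blast
      define a where "a = t (x0, y0)"
      define c where "c = (\<lambda>x. t (x, y0))"
      define r where "r = (\<lambda>y. t (x0, y))"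
      define t' where "t' = (\<lambda>p. t p - inverse a * tprod c r p)"
      have cX: "c \<in> X" and rY: "r \<in> Y" using rows cols unfolding c_def r_def by simp_all
      have cr: "tprod c r \<in> tens X Y" using cX rY by (rule tprod_tens)
      have "X \<subseteq> Cspace" "Y \<subseteq> Cspace" using X Y unfolding fsubspace_iff by simp_all
      then have crC: "tprod c r \<in> Cspace" using cX rY by (intro tprod_Cspace) auto
      have t'C: "t' \<in> Cspace" unfolding t'_def
        by (rule lclosed_diff[OF lclosed_Cspace t lclosed_scale[OF lclosed_Cspace crC]])
      have rows': "(\<lambda>y. t' (x, y)) \<in> Y" for x
      proof -
        have "(\<lambda>y. t' (x, y)) = (\<lambda>y. t (x, y) - (inverse a * c x) * r y)"
          unfolding t'_def by (simp add: mult.assoc)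
        also have "\<dots> \<in> Y"
          by (rule lclosed_diff[OF lY]) (use rows lclosed_scale[OF lY rY] in auto)
        finally show ?thesis .
      qed
      have cols': "(\<lambda>x. t' (x, y)) \<in> X" for y
      proof -
        have "(\<lambda>x. t' (x, y)) = (\<lambda>x. t (x, y) - (inverse a * r y) * c x)"
          unfolding t'_def by (simp add: mult.assoc mult.commute mult.left_commute)
        also have "\<dots> \<in> X"
          by (rule lclosed_diff[OF lX]) (use cols lclosed_scale[OF lX cX] in auto)
        finally show ?thesis .
      qed
      have sub: "?N t' \<subset> ?N t"
      proof
        show "?N t' \<subseteq> ?N t"
        proof
          fix x assume "x \<in> ?N t'"
          then obtain y where "t' (x, y) \<noteq> 0" by blast
          then have "t (x, y) \<noteq> 0 \<or> c x \<noteq> 0" unfolding t'_def by auto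
          then show "x \<in> ?N t" unfolding c_def by blast
        qed
        have "t' (x0, y) = 0" for y
        proof -
          have "t' (x0, y) = t (x0, y) - (inverse a * a) * t (x0, y)"
            unfolding t'_def c_def r_def a_def by (simp add: mult.assoc)
          then show ?thesis using a unfolding a_def by simp
        qed
        then have "x0 \<notin> ?N t'" by blast
        moreover have "x0 \<in> ?N t" using a by blast
        ultimately show "?N t' \<noteq> ?N t" by blast
      qed
      have "card (?N t') < n" using psubset_card_mono[OF finN sub] n by simp
      then have "t' \<in> tens X Y"
        by (intro less.IH[rule_format, of _ t'] conjI t'C allI rows' cols') simp_all
      moreover have "t = (\<lambda>p. t' p + inverse a * tprod c r p)" unfolding t'_def by simp
      moreover have "(\<lambda>p. inverse a * tprod c r p) \<in> tens X Y" using lclosed_scale[OF lclosed_tens cr] by simp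
      ultimately show ?thesis using lclosed_add[OF lclosed_tens, of t' X Y "\<lambda>p. inverse a * tprod c r p"] by simp
    qed
  qed
qed

lemma rows_cols_tens:
  assumes "fsubspace X" "fsubspace Y" "t \<in> Cspace" "\<And>x. (\<lambda>y. t (x, y)) \<in> Y" "\<And>y. (\<lambda>x. t (x, y)) \<in> X"
  shows "t \<in> tens X Y"
  by (rule rank_elim[OF assms(1,2), where n="card {x. \<exists>y. t (x, y) \<noteq> 0}", rule_format]) (intro conjI assms(3) refl allI assms(4,5))




definition supp :: "('a \<Rightarrow> 'k::zero) \<Rightarrow> 'a set" where "supp v = {x. v x \<noteq> 0}"

lemma Cspace_supp: "v \<in> Cspace \<longleftrightarrow> finite (supp v)"
  unfolding Cspace_iff supp_def ..

lemma Delta_expand: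
  assumes "finite A" "supp v \<subseteq> A"
  shows "Delta \<delta> v p = (\<Sum>b\<in>A. v b * \<delta> b p)"
  unfolding Delta_def
  by (rule Sum_any.expand_superset) (use assms in \<open>auto simp: supp_def\<close>)

lemma Delta_Cspace:
  assumes fin: "\<forall>b. \<delta> b \<in> Cspace" and v: "v \<in> Cspace"
  shows "Delta \<delta> v \<in> Cspace"
proof -
  have "Delta \<delta> v = (\<lambda>p. \<Sum>b\<in>supp v. v b * \<delta> b p)"
    using v by (intro ext Delta_expand) (auto simp: Cspace_supp)
  also have "\<dots> \<in> Cspace" using v fin by (intro lclosed_sum[OF lclosed_Cspace]) (auto simp: Cspace_supp)
  finally show ?thesis .
qed

lemma Delta_add:
  assumes u: "u \<in> Cspace" and v: "v \<in> Cspace"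
  shows "Delta \<delta> (\<lambda>x. u x + v x) = (\<lambda>p. Delta \<delta> u p + Delta \<delta> v p)"
proof
  fix p
  let ?A = "supp u \<union> supp v"
  have fA: "finite ?A" using u v by (simp add: Cspace_supp)
  have "Delta \<delta> (\<lambda>x. u x + v x) p = (\<Sum>b\<in>?A. (u b + v b) * \<delta> b p)"
    by (rule Delta_expand[OF fA]) (auto simp: supp_def)
  also have "\<dots> = (\<Sum>b\<in>?A. u b * \<delta> b p) + (\<Sum>b\<in>?A. v b * \<delta> b p)"
    by (simp add: distrib_right sum.distrib)
  also have "\<dots> = Delta \<delta> u p + Delta \<delta> v p"
    using Delta_expand[OF fA, of u] Delta_expand[OF fA, of v] by simp
  finally show "Delta \<delta> (\<lambda>x. u x + v x) p = Delta \<delta> u p + Delta \<delta> v p" .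
qed

lemma Delta_scale:
  assumes v: "v \<in> Cspace"
  shows "Delta \<delta> (\<lambda>x. a * v x) = (\<lambda>p. a * Delta \<delta> v p)"
proof
  fix p
  have fA: "finite (supp v)" using v by (simp add: Cspace_supp)
  have "Delta \<delta> (\<lambda>x. a * v x) p = (\<Sum>b\<in>supp v. (a * v b) * \<delta> b p)"
    by (rule Delta_expand[OF fA]) (auto simp: supp_def)
  also have "\<dots> = a * (\<Sum>b\<in>supp v. v b * \<delta> b p)"
    by (simp add: sum_distrib_left mult.assoc)
  also have "\<dots> = a * Delta \<delta> v p"
    using Delta_expand[OF fA, of v] by simp
  finally show "Delta \<delta> (\<lambda>x. a * v x) p = a * Delta \<delta> v p" .
qed

lemma Delta_zero: "Delta \<delta> (\<lambda>_. 0) = (\<lambda>_. 0)"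
  unfolding Delta_def by simp

lemma Delta_sum:
  assumes fin: "finite I" and A: "\<forall>i\<in>I. f i \<in> Cspace"
  shows "Delta \<delta> (\<lambda>x. \<Sum>i\<in>I. g i * f i x) = (\<lambda>p. \<Sum>i\<in>I. g i * Delta \<delta> (f i) p)"
  using fin A
proof (induction I rule: finite_induct)
  case empty then show ?case by (simp add: Delta_zero)
next
  case (insert i I)
  have fi: "f i \<in> Cspace" using insert by simp
  have s: "(\<lambda>x. \<Sum>i\<in>I. g i * f i x) \<in> Cspace"
    using insert by (intro lclosed_sum[OF lclosed_Cspace]) auto
  have s2: "(\<lambda>x. g i * f i x) \<in> Cspace" by (rule lclosed_scale[OF lclosed_Cspace fi])
  have "Delta \<delta> (\<lambda>x. \<Sum>i\<in>insert i I. g i * f i x) = Delta \<delta> (\<lambda>x. g i * f i x + (\<Sum>i\<in>I. g i * f i x))"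
    using insert by simp
  also have "\<dots> = (\<lambda>p. Delta \<delta> (\<lambda>x. g i * f i x) p + Delta \<delta> (\<lambda>x. \<Sum>i\<in>I. g i * f i x) p)"
    by (rule Delta_add[OF s2 s])
  also have "\<dots> = (\<lambda>p. g i * Delta \<delta> (f i) p + (\<Sum>i\<in>I. g i * Delta \<delta> (f i) p))"
    using insert Delta_scale[OF fi, of \<delta> "g i"] by simp
  also have "\<dots> = (\<lambda>p. \<Sum>i\<in>insert i I. g i * Delta \<delta> (f i) p)"
    using insert by simp
  finally show ?case .
qed

lemma coassoc_eq:
  assumes "coalgebra \<delta> \<epsilon>"
  shows "Sum_any (\<lambda>z. \<delta> c (z, w) * \<delta> z (x, u)) = Sum_any (\<lambda>y. \<delta> c (x, y) * \<delta> y (u, w))"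
  using assms unfolding coalgebra_def by blast

lemma coalg_fin: "coalgebra \<delta> \<epsilon> \<Longrightarrow> \<delta> b \<in> Cspace"
  unfolding coalgebra_def Cspace_def by simp




lemma coassoc_rowcol:
  assumes co: "coalgebra \<delta> \<epsilon>" and v: "v \<in> Cspace"
  shows "Delta \<delta> (\<lambda>y. Delta \<delta> v (x, y)) (u, w) = Sum_any (\<lambda>z. \<delta> z (x, u) * Delta \<delta> v (z, w))"
    and "Delta \<delta> (\<lambda>x. Delta \<delta> v (x, w)) (x', u) = Sum_any (\<lambda>y. Delta \<delta> v (x', y) * \<delta> y (u, w))"
proof -
  define SV where "SV = supp v"
  define U where "U = (\<Union>c\<in>SV. supp (\<delta> c))"
  have fSV: "finite SV" using v unfolding SV_def by (simp add: Cspace_supp)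
  have fU: "finite U" unfolding U_def using fSV coalg_fin[OF co] by (auto simp: Cspace_supp)
  define B1 where "B1 = fst ` U"
  define B2 where "B2 = snd ` U"
  have fB: "finite B1" "finite B2" unfolding B1_def B2_def using fU by auto
  have F1: "Delta \<delta> v p = (\<Sum>c\<in>SV. v c * \<delta> c p)" for p
    by (rule Delta_expand[OF fSV]) (simp add: SV_def)
  have inU: "c \<in> SV \<Longrightarrow> \<delta> c p \<noteq> 0 \<Longrightarrow> p \<in> U" for c p unfolding U_def supp_def by blast
  have F2: "Delta \<delta> v (a, b) \<noteq> 0 \<Longrightarrow> a \<in> B1 \<and> b \<in> B2" for a b
  proof -
    assume "Delta \<delta> v (a, b) \<noteq> 0"
    then have "(\<Sum>c\<in>SV. v c * \<delta> c (a, b)) \<noteq> 0" using F1 by simp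
    then obtain c where "c \<in> SV" "\<delta> c (a, b) \<noteq> 0" by (metis (mono_tags, lifting) mult_zero_right sum.neutral)
    then have "(a, b) \<in> U" by (rule inU)
    then show ?thesis unfolding B1_def B2_def by force
  qed
  have rowC: "supp (\<lambda>y. Delta \<delta> v (x, y)) \<subseteq> B2" for x using F2 unfolding supp_def by blast
  have colC: "supp (\<lambda>x. Delta \<delta> v (x, w)) \<subseteq> B1" for w using F2 unfolding supp_def by blast
  have inner: "c \<in> SV \<Longrightarrow> (\<Sum>b\<in>B2. \<delta> c (x, b) * \<delta> b (u, w)) = (\<Sum>z\<in>B1. \<delta> c (z, w) * \<delta> z (x, u))" for c x u w
  proof -
    assume c: "c \<in> SV"
    have "(\<Sum>b\<in>B2. \<delta> c (x, b) * \<delta> b (u, w)) = Sum_any (\<lambda>b. \<delta> c (x, b) * \<delta> b (u, w))"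
    proof (rule Sum_any.expand_superset[symmetric, OF fB(2)])
      show "{b. \<delta> c (x, b) * \<delta> b (u, w) \<noteq> 0} \<subseteq> B2"
      proof
        fix b assume "b \<in> {b. \<delta> c (x, b) * \<delta> b (u, w) \<noteq> 0}"
        then have "(x, b) \<in> U" using inU[OF c] by simp
        then show "b \<in> B2" unfolding B2_def by force
      qed
    qed
    also have "\<dots> = Sum_any (\<lambda>z. \<delta> c (z, w) * \<delta> z (x, u))" using coassoc_eq[OF co] by simp
    also have "\<dots> = (\<Sum>z\<in>B1. \<delta> c (z, w) * \<delta> z (x, u))"
    proof (rule Sum_any.expand_superset[OF fB(1)])
      show "{z. \<delta> c (z, w) * \<delta> z (x, u) \<noteq> 0} \<subseteq> B1"
      proof
        fix z assume "z \<in> {z. \<delta> c (z, w) * \<delta> z (x, u) \<noteq> 0}"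
        then have "(z, w) \<in> U" using inU[OF c] by simp
        then show "z \<in> B1" unfolding B1_def by force
      qed
    qed
    finally show ?thesis .
  qed
  show "Delta \<delta> (\<lambda>y. Delta \<delta> v (x, y)) (u, w) = Sum_any (\<lambda>z. \<delta> z (x, u) * Delta \<delta> v (z, w))"
  proof -
    have "Delta \<delta> (\<lambda>y. Delta \<delta> v (x, y)) (u, w) = (\<Sum>b\<in>B2. Delta \<delta> v (x, b) * \<delta> b (u, w))"
      by (rule Delta_expand[OF fB(2) rowC])
    also have "\<dots> = (\<Sum>b\<in>B2. \<Sum>c\<in>SV. v c * (\<delta> c (x, b) * \<delta> b (u, w)))"
      by (simp add: F1 sum_distrib_right mult.assoc)
    also have "\<dots> = (\<Sum>c\<in>SV. v c * (\<Sum>b\<in>B2. \<delta> c (x, b) * \<delta> b (u, w)))"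
      by (subst sum.swap) (simp add: sum_distrib_left)
    also have "\<dots> = (\<Sum>c\<in>SV. v c * (\<Sum>z\<in>B1. \<delta> c (z, w) * \<delta> z (x, u)))"
      by (rule sum.cong[OF refl]) (simp add: inner)
    also have "\<dots> = (\<Sum>z\<in>B1. \<delta> z (x, u) * (\<Sum>c\<in>SV. v c * \<delta> c (z, w)))"
      unfolding sum_distrib_left by (subst sum.swap) (simp add: ac_simps)
    also have "\<dots> = (\<Sum>z\<in>B1. \<delta> z (x, u) * Delta \<delta> v (z, w))"
      by (simp add: F1)
    also have "\<dots> = Sum_any (\<lambda>z. \<delta> z (x, u) * Delta \<delta> v (z, w))"
      by (rule Sum_any.expand_superset[symmetric, OF fB(1)]) (use F2 in auto)
    finally show ?thesis .
  qed
  show "Delta \<delta> (\<lambda>x. Delta \<delta> v (x, w)) (x', u) = Sum_any (\<lambda>y. Delta \<delta> v (x', y) * \<delta> y (u, w))"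
  proof -
    have "Delta \<delta> (\<lambda>x. Delta \<delta> v (x, w)) (x', u) = (\<Sum>b\<in>B1. Delta \<delta> v (b, w) * \<delta> b (x', u))"
      by (rule Delta_expand[OF fB(1) colC])
    also have "\<dots> = (\<Sum>b\<in>B1. \<Sum>c\<in>SV. v c * (\<delta> c (b, w) * \<delta> b (x', u)))"
      by (simp add: F1 sum_distrib_right mult.assoc)
    also have "\<dots> = (\<Sum>c\<in>SV. v c * (\<Sum>b\<in>B1. \<delta> c (b, w) * \<delta> b (x', u)))"
      by (subst sum.swap) (simp add: sum_distrib_left)
    also have "\<dots> = (\<Sum>c\<in>SV. v c * (\<Sum>y\<in>B2. \<delta> c (x', y) * \<delta> y (u, w)))"
      by (rule sum.cong[OF refl]) (simp add: inner)
    also have "\<dots> = (\<Sum>y\<in>B2. (\<Sum>c\<in>SV. v c * \<delta> c (x', y)) * \<delta> y (u, w))"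
      unfolding sum_distrib_left sum_distrib_right by (subst sum.swap) (simp add: ac_simps)
    also have "\<dots> = (\<Sum>y\<in>B2. Delta \<delta> v (x', y) * \<delta> y (u, w))"
      by (simp add: F1)
    also have "\<dots> = Sum_any (\<lambda>y. Delta \<delta> v (x', y) * \<delta> y (u, w))"
      by (rule Sum_any.expand_superset[symmetric, OF fB(2)]) (use F2 in auto)
    finally show ?thesis .
  qed
qed




lemma row_Cspace: "t \<in> Cspace \<Longrightarrow> (\<lambda>y. t (x, y)) \<in> Cspace"
proof -
  assume t: "t \<in> Cspace"
  have "{y. t (x, y) \<noteq> 0} \<subseteq> snd ` {p. t p \<noteq> 0}" by force
  moreover have "finite (snd ` {p. t p \<noteq> 0})" using t unfolding Cspace_iff by simp
  ultimately show ?thesis unfolding Cspace_iff by (rule finite_subset)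
qed

lemma col_Cspace: "t \<in> Cspace \<Longrightarrow> (\<lambda>x. t (x, y)) \<in> Cspace"
proof -
  assume t: "t \<in> Cspace"
  have "{x. t (x, y) \<noteq> 0} \<subseteq> fst ` {p. t p \<noteq> 0}" by force
  moreover have "finite (fst ` {p. t p \<noteq> 0})" using t unfolding Cspace_iff by simp
  ultimately show ?thesis unfolding Cspace_iff by (rule finite_subset)
qed

lemma wedge_decomp:
  assumes D: "lclosed D" and E: "lclosed E" and t: "t \<in> fspan (tens D Cspace \<union> tens Cspace E)"
  obtains p q where "p \<in> tens D Cspace" "q \<in> tens Cspace E" "t = (\<lambda>z. p z + q z)"
proof -
  define V where "V = {t. \<exists>p q. p \<in> tens D Cspace \<and> q \<in> tens Cspace E \<and> t = (\<lambda>z. p z + q z)}"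
  have lV: "lclosed V" unfolding lclosed_def
  proof (intro conjI ballI allI)
    show "(\<lambda>_. 0) \<in> V" unfolding V_def
      by (intro CollectI exI[of _ "\<lambda>_. 0"] conjI lclosed_zero[OF lclosed_tens]) simp
  next
    fix u v assume "u \<in> V" "v \<in> V"
    then obtain p q p' q' where pq: "p \<in> tens D Cspace" "q \<in> tens Cspace E" "u = (\<lambda>z. p z + q z)"
      and pq': "p' \<in> tens D Cspace" "q' \<in> tens Cspace E" "v = (\<lambda>z. p' z + q' z)"
      unfolding V_def by (elim CollectE exE conjE)
    show "(\<lambda>x. u x + v x) \<in> V" unfolding V_def
      by (intro CollectI exI[of _ "\<lambda>z. p z + p' z"] exI[of _ "\<lambda>z. q z + q' z"] conjI
          lclosed_add[OF lclosed_tens] pq pq') (simp add: pq pq' ac_simps)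
  next
    fix a v assume "v \<in> V"
    then obtain p q where pq: "p \<in> tens D Cspace" "q \<in> tens Cspace E" "v = (\<lambda>z. p z + q z)"
      unfolding V_def by (elim CollectE exE conjE)
    show "(\<lambda>x. a * v x) \<in> V" unfolding V_def
      by (intro CollectI exI[of _ "\<lambda>z. a * p z"] exI[of _ "\<lambda>z. a * q z"] conjI
          lclosed_scale[OF lclosed_tens] pq) (simp add: pq distrib_left)
  qed
  have "tens D Cspace \<union> tens Cspace E \<subseteq> V"
  proof
    fix t assume "t \<in> tens D Cspace \<union> tens Cspace E"
    then show "t \<in> V"
    proof
      assume "t \<in> tens D Cspace" then show "t \<in> V" unfolding V_def
        by (intro CollectI exI[of _ t] exI[of _ "\<lambda>_. 0"] conjI lclosed_zero[OF lclosed_tens]) simp_all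
    next
      assume "t \<in> tens Cspace E" then show "t \<in> V" unfolding V_def
        by (intro CollectI exI[of _ "\<lambda>_. 0"] exI[of _ t] conjI lclosed_zero[OF lclosed_tens]) simp_all
    qed
  qed
  from fspan_least[OF lV this] t have "t \<in> V" by blast
  then show ?thesis using that unfolding V_def by blast
qed

lemma wedge_compose:
  "p \<in> tens D Cspace \<Longrightarrow> q \<in> tens Cspace E \<Longrightarrow> (\<lambda>z. p z + q z) \<in> fspan (tens D Cspace \<union> tens Cspace E)"
  by (rule lclosed_add[OF lclosed_fspan]) (auto intro: fspan_base)

lemma subcoalg_fsub: "subcoalgebra \<delta> D \<Longrightarrow> fsubspace D"
  unfolding subcoalgebra_def by simp

lemma subcoalg_Delta: "subcoalgebra \<delta> D \<Longrightarrow> v \<in> D \<Longrightarrow> Delta \<delta> v \<in> tens D D"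
  unfolding subcoalgebra_def by simp




lemma wedge_row:
  assumes co: "coalgebra \<delta> \<epsilon>" and sD: "subcoalgebra \<delta> D" and sE: "subcoalgebra \<delta> E"
    and v: "v \<in> wedge \<delta> D E"
  shows "(\<lambda>y. Delta \<delta> v (x, y)) \<in> wedge \<delta> D E"
proof -
  have fD: "fsubspace D" and fE: "fsubspace E" using sD sE by (simp_all add: subcoalg_fsub)
  have lD: "lclosed D" and lE: "lclosed E" and DC: "D \<subseteq> Cspace" and EC: "E \<subseteq> Cspace"
    using fD fE unfolding fsubspace_iff by simp_all
  have vC: "v \<in> Cspace" and vW: "Delta \<delta> v \<in> fspan (tens D Cspace \<union> tens Cspace E)"
    using v unfolding wedge_def by simp_all
  have fin: "\<forall>b. \<delta> b \<in> Cspace" using coalg_fin[OF co] by simp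
  define t where "t = Delta \<delta> v"
  have tC: "t \<in> Cspace" unfolding t_def by (rule Delta_Cspace[OF fin vC])
  obtain p q where p: "p \<in> tens D Cspace" and q: "q \<in> tens Cspace E" and tpq: "t = (\<lambda>z. p z + q z)"
    using wedge_decomp[OF lD lE vW] unfolding t_def by blast
  have pC: "p \<in> Cspace" using p tens_Cspace[OF DC subset_refl] by blast
  have qC: "q \<in> Cspace" using q tens_Cspace[OF subset_refl EC] by blast
  define Z where "Z = fst ` supp p \<union> fst ` supp q"
  have fZ: "finite Z" unfolding Z_def using pC qC by (simp add: Cspace_supp)
  define s where "s = (\<lambda>y. t (x, y))"
  have sC: "s \<in> Cspace" unfolding s_def by (rule row_Cspace[OF tC])
  define P1 where "P1 = (\<lambda>pr. \<Sum>z\<in>Z. 1 * tprod (\<lambda>u. \<delta> z (x, u)) (\<lambda>w. p (z, w)) pr)"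
  define Q1 where "Q1 = (\<lambda>pr. \<Sum>z\<in>Z. 1 * tprod (\<lambda>u. \<delta> z (x, u)) (\<lambda>w. q (z, w)) pr)"
  have P1C: "P1 \<in> Cspace" unfolding P1_def
    by (intro lclosed_sum[OF lclosed_Cspace fZ] ballI tprod_Cspace row_Cspace fin[rule_format] pC qC)
  have Q1C: "Q1 \<in> Cspace" unfolding Q1_def
    by (intro lclosed_sum[OF lclosed_Cspace fZ] ballI tprod_Cspace row_Cspace fin[rule_format] pC qC)
  have P1: "P1 \<in> tens D Cspace"
  proof (rule cols_tens[OF P1C DC])
    fix w
    have cD: "(\<lambda>z. p (z, w)) \<in> D" by (rule tens_slices(2)[OF lD lclosed_Cspace p])
    have cZ: "supp (\<lambda>z. p (z, w)) \<subseteq> Z" unfolding Z_def supp_def by force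
    have "(\<lambda>u. P1 (u, w)) = (\<lambda>u. Delta \<delta> (\<lambda>z. p (z, w)) (x, u))"
      unfolding P1_def by (simp add: Delta_expand[OF fZ cZ] mult.commute)
    also have "\<dots> \<in> D" by (rule tens_slices(1)[OF lD lD subcoalg_Delta[OF sD cD]])
    finally show "(\<lambda>u. P1 (u, w)) \<in> D" .
  qed
  have Q1: "Q1 \<in> tens Cspace E"
  proof (rule rows_tens[OF Q1C EC])
    fix u
    have "(\<lambda>w. Q1 (u, w)) = (\<lambda>w. \<Sum>z\<in>Z. \<delta> z (x, u) * q (z, w))" unfolding Q1_def by simp
    also have "\<dots> \<in> E"
      by (rule lclosed_sum[OF lE fZ]) (intro ballI tens_slices(1)[OF lclosed_Cspace lE q])
    finally show "(\<lambda>w. Q1 (u, w)) \<in> E" .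
  qed
  have "Delta \<delta> s = (\<lambda>pr. P1 pr + Q1 pr)"
  proof
    fix pr :: "'a \<times> 'a" obtain u w where pr: "pr = (u, w)" by force
    have "Delta \<delta> s pr = Sum_any (\<lambda>z. \<delta> z (x, u) * t (z, w))"
      unfolding pr s_def t_def by (rule coassoc_rowcol(1)[OF co vC])
    also have "\<dots> = (\<Sum>z\<in>Z. \<delta> z (x, u) * t (z, w))"
    proof (rule Sum_any.expand_superset[OF fZ], rule subsetI)
      fix z assume "z \<in> {z. \<delta> z (x, u) * t (z, w) \<noteq> 0}"
      then have "p (z, w) \<noteq> 0 \<or> q (z, w) \<noteq> 0" using tpq by auto
      then have "(z, w) \<in> supp p \<or> (z, w) \<in> supp q" unfolding supp_def by simp
      then show "z \<in> Z" unfolding Z_def by (auto intro: image_eqI[of z fst "(z, w)"])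
    qed
    also have "\<dots> = P1 pr + Q1 pr" unfolding P1_def Q1_def pr tpq
      by (simp add: distrib_left sum.distrib)
    finally show "Delta \<delta> s pr = P1 pr + Q1 pr" .
  qed
  then have "Delta \<delta> s \<in> fspan (tens D Cspace \<union> tens Cspace E)"
    using wedge_compose[OF P1 Q1] by simp
  then show ?thesis using sC unfolding wedge_def s_def t_def by simp
qed




lemma wedge_col:
  assumes co: "coalgebra \<delta> \<epsilon>" and sD: "subcoalgebra \<delta> D" and sE: "subcoalgebra \<delta> E"
    and v: "v \<in> wedge \<delta> D E"
  shows "(\<lambda>x. Delta \<delta> v (x, w)) \<in> wedge \<delta> D E"
proof -
  have fD: "fsubspace D" and fE: "fsubspace E" using sD sE by (simp_all add: subcoalg_fsub)
  have lD: "lclosed D" and lE: "lclosed E" and DC: "D \<subseteq> Cspace" and EC: "E \<subseteq> Cspace"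
    using fD fE unfolding fsubspace_iff by simp_all
  have vC: "v \<in> Cspace" and vW: "Delta \<delta> v \<in> fspan (tens D Cspace \<union> tens Cspace E)"
    using v unfolding wedge_def by simp_all
  have fin: "\<forall>b. \<delta> b \<in> Cspace" using coalg_fin[OF co] by simp
  define t where "t = Delta \<delta> v"
  have tC: "t \<in> Cspace" unfolding t_def by (rule Delta_Cspace[OF fin vC])
  obtain p q where p: "p \<in> tens D Cspace" and q: "q \<in> tens Cspace E" and tpq: "t = (\<lambda>z. p z + q z)"
    using wedge_decomp[OF lD lE vW] unfolding t_def by blast
  have pC: "p \<in> Cspace" using p tens_Cspace[OF DC subset_refl] by blast
  have qC: "q \<in> Cspace" using q tens_Cspace[OF subset_refl EC] by blast
  define Z where "Z = snd ` supp p \<union> snd ` supp q"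
  have fZ: "finite Z" unfolding Z_def using pC qC by (simp add: Cspace_supp)
  define s where "s = (\<lambda>x. t (x, w))"
  have sC: "s \<in> Cspace" unfolding s_def by (rule col_Cspace[OF tC])
  define P1 where "P1 = (\<lambda>pr. \<Sum>y\<in>Z. 1 * tprod (\<lambda>x. p (x, y)) (\<lambda>u. \<delta> y (u, w)) pr)"
  define Q1 where "Q1 = (\<lambda>pr. \<Sum>y\<in>Z. 1 * tprod (\<lambda>x. q (x, y)) (\<lambda>u. \<delta> y (u, w)) pr)"
  have P1C: "P1 \<in> Cspace" unfolding P1_def
    by (intro lclosed_sum[OF lclosed_Cspace fZ] ballI tprod_Cspace col_Cspace fin[rule_format] pC qC)
  have Q1C: "Q1 \<in> Cspace" unfolding Q1_def
    by (intro lclosed_sum[OF lclosed_Cspace fZ] ballI tprod_Cspace col_Cspace fin[rule_format] pC qC)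
  have P1: "P1 \<in> tens D Cspace"
  proof (rule cols_tens[OF P1C DC])
    fix u
    have "(\<lambda>x. P1 (x, u)) = (\<lambda>x. \<Sum>y\<in>Z. \<delta> y (u, w) * p (x, y))" unfolding P1_def by (simp add: mult.commute)
    also have "\<dots> \<in> D"
      by (rule lclosed_sum[OF lD fZ]) (intro ballI tens_slices(2)[OF lD lclosed_Cspace p])
    finally show "(\<lambda>x. P1 (x, u)) \<in> D" .
  qed
  have Q1: "Q1 \<in> tens Cspace E"
  proof (rule rows_tens[OF Q1C EC])
    fix x
    have rE: "(\<lambda>y. q (x, y)) \<in> E" by (rule tens_slices(1)[OF lclosed_Cspace lE q])
    have rZ: "supp (\<lambda>y. q (x, y)) \<subseteq> Z" unfolding Z_def supp_def by force
    have "(\<lambda>u. Q1 (x, u)) = (\<lambda>u. Delta \<delta> (\<lambda>y. q (x, y)) (u, w))"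
      unfolding Q1_def by (simp add: Delta_expand[OF fZ rZ])
    also have "\<dots> \<in> E" by (rule tens_slices(2)[OF lE lE subcoalg_Delta[OF sE rE]])
    finally show "(\<lambda>u. Q1 (x, u)) \<in> E" .
  qed
  have "Delta \<delta> s = (\<lambda>pr. P1 pr + Q1 pr)"
  proof
    fix pr :: "'a \<times> 'a" obtain x u where pr: "pr = (x, u)" by force
    have "Delta \<delta> s pr = Sum_any (\<lambda>y. t (x, y) * \<delta> y (u, w))"
      unfolding pr s_def t_def by (rule coassoc_rowcol(2)[OF co vC])
    also have "\<dots> = (\<Sum>y\<in>Z. t (x, y) * \<delta> y (u, w))"
    proof (rule Sum_any.expand_superset[OF fZ], rule subsetI)
      fix y assume "y \<in> {y. t (x, y) * \<delta> y (u, w) \<noteq> 0}"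
      then have "p (x, y) \<noteq> 0 \<or> q (x, y) \<noteq> 0" using tpq by auto
      then have "(x, y) \<in> supp p \<or> (x, y) \<in> supp q" unfolding supp_def by simp
      then show "y \<in> Z" unfolding Z_def by (auto intro: image_eqI[of y snd "(x, y)"])
    qed
    also have "\<dots> = P1 pr + Q1 pr" unfolding P1_def Q1_def pr tpq
      by (simp add: distrib_right sum.distrib)
    finally show "Delta \<delta> s pr = P1 pr + Q1 pr" .
  qed
  then have "Delta \<delta> s \<in> fspan (tens D Cspace \<union> tens Cspace E)"
    using wedge_compose[OF P1 Q1] by simp
  then show ?thesis using sC unfolding wedge_def s_def t_def by simp
qed

lemma wedge_fsubspace:
  assumes co: "coalgebra \<delta> \<epsilon>"
  shows "fsubspace (wedge \<delta> D E)"
proof -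
  have fin: "\<forall>b. \<delta> b \<in> Cspace" using coalg_fin[OF co] by simp
  let ?F = "fspan (tens D Cspace \<union> tens Cspace E)"
  have "lclosed (wedge \<delta> D E)" unfolding lclosed_def
  proof (intro conjI ballI allI)
    show "(\<lambda>_. 0) \<in> wedge \<delta> D E" unfolding wedge_def
      by (simp add: Delta_zero Cspace_iff lclosed_zero[OF lclosed_fspan])
  next
    fix u v assume "u \<in> wedge \<delta> D E" "v \<in> wedge \<delta> D E"
    then have u: "u \<in> Cspace" "Delta \<delta> u \<in> ?F" and v: "v \<in> Cspace" "Delta \<delta> v \<in> ?F"
      unfolding wedge_def by simp_all
    show "(\<lambda>x. u x + v x) \<in> wedge \<delta> D E" unfolding wedge_def
      using lclosed_add[OF lclosed_Cspace u(1) v(1)] lclosed_add[OF lclosed_fspan u(2) v(2)]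
      by (simp add: Delta_add[OF u(1) v(1)])
  next
    fix a v assume "v \<in> wedge \<delta> D E"
    then have v: "v \<in> Cspace" "Delta \<delta> v \<in> ?F" unfolding wedge_def by simp_all
    show "(\<lambda>x. a * v x) \<in> wedge \<delta> D E" unfolding wedge_def
      using lclosed_scale[OF lclosed_Cspace v(1)] lclosed_scale[OF lclosed_fspan v(2)]
      by (simp add: Delta_scale[OF v(1)])
  qed
  moreover have "wedge \<delta> D E \<subseteq> Cspace" unfolding wedge_def by blast
  ultimately show ?thesis unfolding fsubspace_iff by simp
qed

lemma wedge_subcoalg:
  assumes co: "coalgebra \<delta> \<epsilon>" and sD: "subcoalgebra \<delta> D" and sE: "subcoalgebra \<delta> E"
  shows "subcoalgebra \<delta> (wedge \<delta> D E)"
  unfolding subcoalgebra_def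
proof (intro conjI ballI)
  show fW: "fsubspace (wedge \<delta> D E)" by (rule wedge_fsubspace[OF co])
  fix v assume v: "v \<in> wedge \<delta> D E"
  have vC: "v \<in> Cspace" using v unfolding wedge_def by simp
  have fin: "\<forall>b. \<delta> b \<in> Cspace" using coalg_fin[OF co] by simp
  show "Delta \<delta> v \<in> tens (wedge \<delta> D E) (wedge \<delta> D E)"
    by (rule rows_cols_tens[OF fW fW Delta_Cspace[OF fin vC]])
      (auto intro: wedge_row[OF co sD sE v] wedge_col[OF co sD sE v])
qed




lemma simple_sub: "simple_subcoalgebra \<delta> D \<Longrightarrow> subcoalgebra \<delta> D"
  unfolding simple_subcoalgebra_def by (elim conjE)

lemma simple_C: "simple_subcoalgebra \<delta> D \<Longrightarrow> D \<subseteq> Cspace"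
  using subcoalg_fsub[OF simple_sub, of \<delta> D] unfolding fsubspace_iff by simp

lemma coradical_subcoalg:
  assumes co: "coalgebra \<delta> \<epsilon>"
  shows "subcoalgebra \<delta> (coradical \<delta>)"
proof -
  define S where "S = \<Union>{D. simple_subcoalgebra \<delta> D}"
  have SC: "S \<subseteq> Cspace"
  proof
    fix x assume "x \<in> S"
    then obtain D where "simple_subcoalgebra \<delta> D" "x \<in> D" unfolding S_def by blast
    then show "x \<in> Cspace" using simple_C[of \<delta> D] by blast
  qed
  have fS: "fsubspace (fspan S)" by (rule fsubspace_fspan[OF SC])
  have "Delta \<delta> v \<in> tens (fspan S) (fspan S)" if v: "v \<in> fspan S" for v
  proof -
    obtain A c where A: "finite A" "A \<subseteq> S" "v = (\<lambda>x. \<Sum>a\<in>A. c a * a x)"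
      using v unfolding fspan_def by (elim CollectE exE conjE)
    have "Delta \<delta> v = (\<lambda>p. \<Sum>a\<in>A. c a * Delta \<delta> a p)"
      unfolding A(3) by (rule Delta_sum[OF A(1)]) (use A(2) SC in blast)
    also have "\<dots> \<in> tens (fspan S) (fspan S)"
    proof (rule lclosed_sum[OF lclosed_tens A(1)], rule ballI)
      fix a assume "a \<in> A"
      then obtain D where D: "simple_subcoalgebra \<delta> D" "a \<in> D" using A(2) unfolding S_def by blast
      then have DD: "Delta \<delta> a \<in> tens D D" by (intro subcoalg_Delta[OF simple_sub])
      have "D \<subseteq> S" unfolding S_def using D(1) by blast
      then have DS: "D \<subseteq> fspan S" by (meson fspan_base subset_iff)
      show "Delta \<delta> a \<in> tens (fspan S) (fspan S)" by (rule subsetD[OF tens_mono[OF DS DS] DD])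
    qed
    finally show ?thesis .
  qed
  then show ?thesis unfolding subcoalgebra_def coradical_def S_def[symmetric] using fS by simp
qed

lemma coradical_Cspace: "coradical \<delta> \<subseteq> Cspace"
proof -
  have "\<Union>{D. simple_subcoalgebra \<delta> D} \<subseteq> Cspace"
    using simple_C by blast
  then show ?thesis unfolding coradical_def by (rule fspan_Cspace)
qed

lemma corad_le: "coalgebra \<delta> \<epsilon> \<Longrightarrow> coradical \<delta> \<subseteq> corad_filt \<delta> m"
proof (induction m)
  case 0 then show ?case by simp
next
  case (Suc m)
  have sc: "subcoalgebra \<delta> (coradical \<delta>)" by (rule coradical_subcoalg[OF Suc.prems])
  show ?case
  proof
    fix v assume v: "v \<in> coradical \<delta>"
    have "Delta \<delta> v \<in> tens (coradical \<delta>) (coradical \<delta>)" by (rule subcoalg_Delta[OF sc v])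
    also have "\<dots> \<subseteq> tens (corad_filt \<delta> m) Cspace"
      by (rule tens_mono[OF Suc.IH[OF Suc.prems] coradical_Cspace])
    finally have "Delta \<delta> v \<in> fspan (tens (corad_filt \<delta> m) Cspace \<union> tens Cspace (coradical \<delta>))"
      by (intro fspan_base) simp
    moreover have "v \<in> Cspace" using v coradical_Cspace by blast
    ultimately show "v \<in> corad_filt \<delta> (Suc m)" unfolding corad_filt.simps wedge_def by simp
  qed
qed

lemma filt_subcoalg: "coalgebra \<delta> \<epsilon> \<Longrightarrow> subcoalgebra \<delta> (corad_filt \<delta> m)"
proof (induction m)
  case 0 then show ?case using coradical_subcoalg by simp
next
  case (Suc m) then show ?case using wedge_subcoalg[OF Suc.prems Suc.IH[OF Suc.prems] coradical_subcoalg[OF Suc.prems]] by simp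
qed

lemma wedge_mono2: "E \<subseteq> E' \<Longrightarrow> wedge \<delta> D E \<subseteq> wedge \<delta> D E'"
proof -
  assume "E \<subseteq> E'"
  then have "fspan (tens D Cspace \<union> tens Cspace E) \<subseteq> fspan (tens D Cspace \<union> tens Cspace E')"
    using tens_mono[of Cspace Cspace E E'] by (intro fspan_mono) blast
  then show ?thesis unfolding wedge_def by blast
qed

theorem mainTheorem12:
  fixes \<delta> :: "'b \<Rightarrow> 'b \<times> 'b \<Rightarrow> 'k::field" and \<epsilon> :: "'b \<Rightarrow> 'k"
  assumes "coalgebra \<delta> \<epsilon>"
    and "semiprime \<delta>"
    and "\<exists>n. corad_filt \<delta> n = Cspace"
  shows "cosemisimple \<delta>"
proof -
  have "corad_filt \<delta> n = Cspace \<Longrightarrow> coradical \<delta> = Cspace" for n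
  proof (induction n)
    case 0 then show ?case by simp
  next
    case (Suc m)
    have "Cspace = wedge \<delta> (corad_filt \<delta> m) (coradical \<delta>)" using Suc.prems by simp
    also have "\<dots> \<subseteq> wedge \<delta> (corad_filt \<delta> m) (corad_filt \<delta> m)"
      by (rule wedge_mono2[OF corad_le[OF assms(1)]])
    finally have sub: "Cspace \<subseteq> wedge \<delta> (corad_filt \<delta> m) (corad_filt \<delta> m)" .
    have W:  "wedge \<delta> (corad_filt \<delta> m) (corad_filt \<delta> m) \<subseteq> Cspace"
      unfolding wedge_def by (rule Collect_subset)
    have eq: "wedge \<delta> (corad_filt \<delta> m) (corad_filt \<delta> m) = Cspace"
      by (rule equalityI[OF W sub])
    have "subcoalgebra \<delta> (corad_filt \<delta> m) \<and> wedge \<delta> (corad_filt \<delta> m) (corad_filt \<delta> m) = Cspace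
       \<longrightarrow> corad_filt \<delta> m = Cspace"
      using assms(2) unfolding semiprime_def by (rule spec)
    then have "corad_filt \<delta> m = Cspace"
      using filt_subcoalg[OF assms(1)] eq by simp
    then show ?case by (rule Suc.IH)
  qed
  then show ?thesis using assms(3) unfolding cosemisimple_def by (elim exE)
qed


end
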